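(* Let $X(1),\dots,X(n)$ be i.i.d. $\mathcal{N}(0,\sigma_X^2)$ with $\sigma_X^2>0$, and let $\hat X^n=(\hat X(1),\dots,\hat X(n))$ be any random vector in $\mathbb{R}^n$ with $\mathbb{E}[\hat X^n\mid X^n]=X^n$ almost surely and with $0<D(X^n,\hat X^n)<\infty$, where $D(X^n,\hat X^n)=\frac1n\sum_{t=1}^n\mathbb{E}[(X(t)-\hat X(t))^2]$. Then $$\frac1n I(X^n;\hat X^n)\ \ge\ \frac12\log\Big(1+\frac{\sigma_X^2}{D(X^n,\hat X^n)}\Big).$$
   Context: $I(\cdot;\cdot)$ denotes mutual information; logarithms are natural. *)

theory Defs
  imports "HOL-Probability.Probability"
begin

text \<open>Mutual information in nats (natural logarithm, base e), with values in the
extended reals: it is the KL divergence of the joint law from the product of the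
marginals, and equals +infinity when the joint law is not absolutely continuous
w.r.t. the product of the marginals or when the information density is not
integrable (the standard convention).\<close>

definition mutual_info ::
  "'a measure \<Rightarrow> 'b measure \<Rightarrow> 'c measure \<Rightarrow> ('a \<Rightarrow> 'b) \<Rightarrow> ('a \<Rightarrow> 'c) \<Rightarrow> ereal" where
  "mutual_info M S T X Y =
     (let P = distr M S X \<Otimes>\<^sub>M distr M T Y;
          Q = distr M (S \<Otimes>\<^sub>M T) (\<lambda>x. (X x, Y x))
      in if absolutely_continuous P Q \<and> integrable Q (entropy_density (exp 1) P Q)
         then ereal (prob_space.mutual_information M (exp 1) S T X Y)
         else \<infinity>)"

end

theory Submission imports Defs begin

lemma KL_lower:
  fixes P Q :: "'b measure" and g :: "'b \<Rightarrow> real"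
  assumes sf: "sigma_finite_measure P" and pQ: "prob_space Q"
    and ac: "absolutely_continuous P Q" and sets_eq: "sets Q = sets P"
    and g_meas: "g \<in> borel_measurable P" and g_int: "integrable Q g"
    and ent_int: "integrable Q (entropy_density (exp 1) P Q)"
    and bound: "(\<integral>\<^sup>+ z. ennreal (exp (g z)) \<partial>P) \<le> 1"
  shows "integral\<^sup>L Q g \<le> KL_divergence (exp 1) P Q"
proof -
  interpret P: sigma_finite_measure P by fact
  interpret Q: prob_space Q by fact
  define r where "r = RN_deriv P Q"
  define \<rho> where "\<rho> z = enn2real (r z)" for z
  have r_meas[measurable]: "r \<in> borel_measurable P" unfolding r_def by simp
  have Qd: "Q = density P r" unfolding r_def using P.density_RN_deriv[OF ac sets_eq] by simp
  have fin: "AE z in P. r z \<noteq> \<infinity>" unfolding r_def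
    by (rule P.RN_deriv_finite[OF _ ac sets_eq]) (simp add: Q.sigma_finite_measure_axioms)
  have AEQ: "AE z in Q. 0 < \<rho> z \<and> r z = ennreal (\<rho> z)"
  proof -
    have "AE z in P. 0 < r z \<longrightarrow> 0 < \<rho> z \<and> r z = ennreal (\<rho> z)"
      using fin by eventually_elim (simp add: \<rho>_def enn2real_positive_iff less_top)
    then show ?thesis unfolding Qd by (subst AE_density) auto
  qed
  have ent: "entropy_density (exp 1) P Q z = ln (\<rho> z)" for z
    unfolding entropy_density_def \<rho>_def r_def by (simp add: log_def)
  have ent': "entropy_density (exp 1) P Q = (\<lambda>z. ln (\<rho> z))" using ent by (rule ext)
  have ln_int: "integrable Q (\<lambda>z. ln (\<rho> z))" using ent_int by (simp add: ent')
  define h where "h z = exp (g z) / \<rho> z" for z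
  have h_measP[measurable]: "h \<in> borel_measurable P"
    unfolding h_def \<rho>_def using g_meas r_meas by measurable
  have h_meas[measurable]: "h \<in> borel_measurable Q"
    using h_measP by (subst measurable_cong_sets[OF sets_eq refl])
  have "(\<integral>\<^sup>+ z. ennreal (h z) \<partial>Q) = (\<integral>\<^sup>+ z. r z * ennreal (h z) \<partial>P)"
    unfolding Qd using h_measP by (subst nn_integral_density) auto
  also have "\<dots> \<le> (\<integral>\<^sup>+ z. ennreal (exp (g z)) \<partial>P)"
  proof (intro nn_integral_mono)
    fix z
    show "r z * ennreal (h z) \<le> ennreal (exp (g z))"
    proof (cases "r z = \<infinity>")
      case True then show ?thesis by (simp add: h_def \<rho>_def)
    next
      case False
      then have "r z = ennreal (\<rho> z)" unfolding \<rho>_def by (simp add: ennreal_enn2real_if)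
      moreover have "\<rho> z * h z \<le> exp (g z)"
        unfolding h_def by (cases "\<rho> z = 0") (auto simp: \<rho>_def)
      moreover have "0 \<le> h z" unfolding h_def \<rho>_def by simp
      ultimately show ?thesis
        by (metis ennreal_leI ennreal_mult' enn2real_nonneg \<rho>_def)
    qed
  qed
  also have "\<dots> \<le> 1" by fact
  finally have hle: "(\<integral>\<^sup>+ z. ennreal (h z) \<partial>Q) \<le> 1" .
  have h_nn: "0 \<le> h z" for z unfolding h_def \<rho>_def by simp
  have h_int: "integrable Q h"
  proof (rule integrableI_nonneg)
    show "(\<integral>\<^sup>+ z. ennreal (h z) \<partial>Q) < \<infinity>" using hle by (rule order_le_less_trans) simp
  qed (use h_nn in auto)
  have hI: "integral\<^sup>L Q h \<le> 1"
    using hle h_nn h_int by (subst integral_eq_nn_integral) (auto simp: enn2real_leI)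
  have "integral\<^sup>L Q g - KL_divergence (exp 1) P Q = (\<integral>z. g z - ln (\<rho> z) \<partial>Q)"
    unfolding KL_divergence_def ent' using g_int ln_int by (simp add: Bochner_Integration.integral_diff)
  also have "\<dots> \<le> (\<integral>z. h z - 1 \<partial>Q)"
  proof (rule integral_mono_AE)
    show "integrable Q (\<lambda>z. g z - ln (\<rho> z))" using g_int ln_int by simp
    show "integrable Q (\<lambda>z. h z - 1)" using h_int by simp
    show "AE z in Q. g z - ln (\<rho> z) \<le> h z - 1"
      using AEQ
    proof eventually_elim
      case (elim z)
      then have p: "0 < \<rho> z" by simp
      have "ln (h z) \<le> h z - 1" by (rule ln_le_minus_one) (simp add: h_def p)
      moreover have "ln (h z) = g z - ln (\<rho> z)" using p by (simp add: h_def ln_div)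
      ultimately show "g z - ln (\<rho> z) \<le> h z - 1" by simp
    qed
  qed
  also have "\<dots> = integral\<^sup>L Q h - 1" using h_int by (simp add: Q.prob_space)
  also have "\<dots> \<le> 0" using hI by simp
  finally show ?thesis by simp
qed


lemma measurable_nth_comp[measurable (raw)]:
  fixes f :: "'b \<Rightarrow> real ^ 'n"
  shows "f \<in> borel_measurable M \<Longrightarrow> (\<lambda>x. f x $ i) \<in> borel_measurable M"
  using measurable_compose[OF _ borel_measurable_nth] by blast

lemma integrable_L2_prod:
  fixes f h :: "'b \<Rightarrow> real"
  assumes [measurable]: "f \<in> borel_measurable M" "h \<in> borel_measurable M"
    and "integrable M (\<lambda>x. (f x)\<^sup>2)" "integrable M (\<lambda>x. (h x)\<^sup>2)"
  shows "integrable M (\<lambda>x. f x * h x)"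
proof (rule Bochner_Integration.integrable_bound[of _ "\<lambda>x. (f x)\<^sup>2 + (h x)\<^sup>2"])
  show "integrable M (\<lambda>x. (f x)\<^sup>2 + (h x)\<^sup>2)" using assms by simp
  show "AE x in M. norm (f x * h x) \<le> norm ((f x)\<^sup>2 + (h x)\<^sup>2)"
  proof (rule AE_I2)
    fix x
    have "2 * (\<bar>f x\<bar> * \<bar>h x\<bar>) \<le> (f x)\<^sup>2 + (h x)\<^sup>2"
      using sum_squares_bound[of "\<bar>f x\<bar>" "\<bar>h x\<bar>"] by (simp add: mult.assoc)
    moreover have "0 \<le> \<bar>f x\<bar> * \<bar>h x\<bar>" by simp
    ultimately have "\<bar>f x\<bar> * \<bar>h x\<bar> \<le> (f x)\<^sup>2 + (h x)\<^sup>2" by linarith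
    then show "norm (f x * h x) \<le> norm ((f x)\<^sup>2 + (h x)\<^sup>2)"
      by (simp add: abs_mult)
  qed
qed simp

lemma nd_ident:
  fixes S D \<sigma> v m z :: real
  assumes "0 < S" "0 < D" "0 < \<sigma>" "S = \<sigma>\<^sup>2" "v = S * D / (S + D)"
  shows "normal_density 0 \<sigma> z * exp (ln (sqrt (1 + S / D)) - (z - m)\<^sup>2 / (2 * v) + z\<^sup>2 / (2 * S))
       = normal_density m (sqrt v) z"
proof -
  have vpos: "0 < v" using assms by (simp add: add_pos_pos)
  have w: "0 < 1 + S / D" using assms by (simp add: add_pos_pos)
  have sq: "0 < sqrt (1 + S / D)" using w by simp
  have e: "exp (ln (sqrt (1 + S / D)) - (z - m)\<^sup>2 / (2 * v) + z\<^sup>2 / (2 * S))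
      = sqrt (1 + S / D) * exp (- (z - m)\<^sup>2 / (2 * v)) * exp (z\<^sup>2 / (2 * S))"
  proof -
    have "exp (- (z - m)\<^sup>2 / (2 * v)) = inverse (exp ((z - m)\<^sup>2 / (2 * v)))"
      by (simp add: exp_minus[symmetric])
    then show ?thesis
      by (simp only: exp_add exp_diff exp_ln[OF sq, unfolded divide_inverse] divide_inverse)
  qed
  have c: "1 / sqrt (2 * pi * \<sigma>\<^sup>2) * sqrt (1 + S / D) = 1 / sqrt (2 * pi * v)"
  proof -
    have "2 * pi * \<sigma>\<^sup>2 / (1 + S / D) = 2 * pi * v"
      using assms by (simp add: field_simps)
    then have "sqrt (2 * pi * \<sigma>\<^sup>2) / sqrt (1 + S / D) = sqrt (2 * pi * v)"
      by (simp flip: real_sqrt_divide)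
    moreover have "sqrt (1 + S / D) > 0" using w by simp
    ultimately show ?thesis by (simp add: field_simps)
  qed
  have ex: "exp (- (z - 0)\<^sup>2 / (2 * \<sigma>\<^sup>2)) * exp (z\<^sup>2 / (2 * S)) = 1"
    using assms by (simp flip: exp_add)
  have "normal_density 0 \<sigma> z * exp (ln (sqrt (1 + S / D)) - (z - m)\<^sup>2 / (2 * v) + z\<^sup>2 / (2 * S))
     = (1 / sqrt (2 * pi * \<sigma>\<^sup>2) * sqrt (1 + S / D)) *
       (exp (- (z - 0)\<^sup>2 / (2 * \<sigma>\<^sup>2)) * exp (z\<^sup>2 / (2 * S))) * exp (- (z - m)\<^sup>2 / (2 * v))"
    unfolding normal_density_def e by (simp only: mult_ac)
  also have "\<dots> = 1 / sqrt (2 * pi * v) * exp (- (z - m)\<^sup>2 / (2 * v))"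
    unfolding c ex by simp
  also have "\<dots> = normal_density m (sqrt v) z"
    unfolding normal_density_def using vpos by (simp add: real_sqrt_pow2 less_imp_le)
  finally show ?thesis .
qed

lemma sum_aff:
  fixes d :: "'n::finite \<Rightarrow> real"
  shows "(\<Sum>t\<in>UNIV. c + K + L * d t) = real CARD('n) * c + (K * real CARD('n) + L * (\<Sum>t\<in>UNIV. d t))"
  by (simp add: sum.distrib sum_distrib_left algebra_simps)

theorem lemma3:
  fixes M :: "'a measure"
    and X Xhat :: "'a \<Rightarrow> real ^ 'n"
    and \<sigma> :: real
  assumes "prob_space M"
    and "\<sigma> > 0"
    and X_meas: "X \<in> borel_measurable M"
    and Xhat_meas: "Xhat \<in> borel_measurable M"
    and X_indep: "prob_space.indep_vars M (\<lambda>_. borel) (\<lambda>t \<omega>. X \<omega> $ t) UNIV"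
    and X_gauss: "\<And>t. distributed M lborel (\<lambda>\<omega>. X \<omega> $ t) (\<lambda>x. ennreal (normal_density 0 \<sigma> x))"
    and Xhat_int: "\<And>t. integrable M (\<lambda>\<omega>. Xhat \<omega> $ t)"
    and unbiased: "\<And>t. AE \<omega> in M.
          real_cond_exp M (vimage_algebra (space M) X borel) (\<lambda>\<omega>. Xhat \<omega> $ t) \<omega> = X \<omega> $ t"
    and D_finite: "\<And>t. integrable M (\<lambda>\<omega>. (X \<omega> $ t - Xhat \<omega> $ t)\<^sup>2)"
    and D_pos: "(1 / real CARD('n)) * (\<Sum>t\<in>UNIV. \<integral>\<omega>. (X \<omega> $ t - Xhat \<omega> $ t)\<^sup>2 \<partial>M) > 0"
  shows "ereal (1 / 2 * ln (1 + \<sigma>\<^sup>2 /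
            ((1 / real CARD('n)) * (\<Sum>t\<in>UNIV. \<integral>\<omega>. (X \<omega> $ t - Xhat \<omega> $ t)\<^sup>2 \<partial>M))))
         \<le> mutual_info M borel borel X Xhat / ereal (real CARD('n))"
proof -
  interpret prob_space M by fact
  note [measurable] = X_meas Xhat_meas
  define nr where "nr = real CARD('n)"
  have nr_pos: "0 < nr" unfolding nr_def by simp
  define D where "D = (1 / real CARD('n)) * (\<Sum>t\<in>UNIV. \<integral>\<omega>. (X \<omega> $ t - Xhat \<omega> $ t)\<^sup>2 \<partial>M)"
  have D_pos': "0 < D" using D_pos unfolding D_def .
  define S where "S = \<sigma>\<^sup>2"
  have S_pos: "0 < S" unfolding S_def using \<open>\<sigma> > 0\<close> by simp
  define a where "a = S / (S + D)"
  define v where "v = S * D / (S + D)"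
  have v_pos: "0 < v" unfolding v_def using S_pos D_pos' by simp
  define s where "s = sqrt v"
  have s_pos: "0 < s" unfolding s_def using v_pos by simp
  define c where "c = ln (sqrt (1 + S / D))"
  have c_eq: "c = 1 / 2 * ln (1 + S / D)"
    unfolding c_def using S_pos D_pos' by (subst ln_sqrt) (auto intro: add_nonneg_nonneg)
  define PX where "PX = distr M borel X"
  define PY where "PY = distr M borel Xhat"
  define P where "P = PX \<Otimes>\<^sub>M PY"
  define Q where "Q = distr M (borel \<Otimes>\<^sub>M borel) (\<lambda>\<omega>. (X \<omega>, Xhat \<omega>))"
  define g where "g z = (\<Sum>t\<in>UNIV. c - (fst z $ t - a * snd z $ t)\<^sup>2 / (2 * v) + (fst z $ t)\<^sup>2 / (2 * S))"
    for z :: "(real ^ 'n) \<times> (real ^ 'n)"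
  have g_meas: "g \<in> borel_measurable P"
    unfolding g_def P_def PX_def PY_def by measurable
  have g_meas2[measurable]: "g \<in> borel_measurable (borel \<Otimes>\<^sub>M borel)"
    unfolding g_def by measurable
  have pPX: "prob_space PX" unfolding PX_def by (rule prob_space_distr) simp
  have pPY: "prob_space PY" unfolding PY_def by (rule prob_space_distr) simp
  interpret PXY: pair_prob_space PX PY
    using pPX pPY by (simp add: pair_prob_space_def pair_sigma_finite_def prob_space_imp_sigma_finite)
  have pQ: "prob_space Q" unfolding Q_def by (rule prob_space_distr) simp
  have sfP: "sigma_finite_measure P" unfolding P_def
    using PXY.P.prob_space_axioms by (rule prob_space_imp_sigma_finite)
  have sets_eq: "sets Q = sets P" unfolding Q_def P_def PX_def PY_def
    by (simp cong: sets_pair_measure_cong)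
  define W where "W t \<omega> = Xhat \<omega> $ t - X \<omega> $ t" for t \<omega>
  have W_meas[measurable]: "W t \<in> borel_measurable M" for t unfolding W_def by measurable
  have X2_int: "integrable M (\<lambda>\<omega>. (X \<omega> $ t)\<^sup>2)" for t
  proof -
    have "integrable lborel (\<lambda>x. normal_density 0 \<sigma> x * x\<^sup>2)"
      using integrable_normal_moment[OF \<open>\<sigma> > 0\<close>, of 0 2] by simp
    then show ?thesis using distributed_integrable[OF X_gauss, of "\<lambda>x. x\<^sup>2"] by simp
  qed
  have X2_val: "(\<integral>\<omega>. (X \<omega> $ t)\<^sup>2 \<partial>M) = S" for t
  proof -
    have "(\<integral>x. normal_density 0 \<sigma> x * x\<^sup>2 \<partial>lborel) = \<sigma>\<^sup>2"
      using integral_normal_moment_even[OF \<open>\<sigma> > 0\<close>, of 0 1] by (simp add: numeral_eq_Suc)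
    then show ?thesis using distributed_integral[OF X_gauss, of "\<lambda>x. x\<^sup>2"] by (simp add: S_def)
  qed
  have W2_eq: "(W t \<omega>)\<^sup>2 = (X \<omega> $ t - Xhat \<omega> $ t)\<^sup>2" for t \<omega>
    unfolding W_def by (rule power2_commute)
  have W2_int: "integrable M (\<lambda>\<omega>. (W t \<omega>)\<^sup>2)" for t
    unfolding W2_eq using D_finite .
  have XW_int: "integrable M (\<lambda>\<omega>. X \<omega> $ t * W t \<omega>)" for t
    by (rule integrable_L2_prod[OF _ _ X2_int W2_int]) simp_all
  define F where "F = vimage_algebra (space M) X borel"
  have subalg: "subalgebra M F"
    unfolding subalgebra_def F_def
  proof
    show "sets (vimage_algebra (space M) X borel) \<subseteq> sets M"
      unfolding sets_vimage_algebra
      by (rule sets.sigma_sets_subset) (auto intro: measurable_sets[OF X_meas])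
  qed simp
  interpret Fsub: sigma_finite_subalgebra M F
    by (rule finite_measure_subalgebra_is_sigma_finite)
       (simp add: finite_measure_subalgebra_def finite_measure_subalgebra_axioms_def subalg
                  finite_measure_axioms)
  have XF[measurable]: "X \<in> borel_measurable F"
    unfolding F_def by (rule measurable_vimage_algebra1) simp
  have XW_val: "(\<integral>\<omega>. X \<omega> $ t * W t \<omega> \<partial>M) = 0" for t
  proof -
    have XY_int: "integrable M (\<lambda>\<omega>. X \<omega> $ t * Xhat \<omega> $ t)"
    proof -
      have "integrable M (\<lambda>\<omega>. X \<omega> $ t * W t \<omega> + (X \<omega> $ t)\<^sup>2)"
        using XW_int[of t] X2_int[of t] by simp
      moreover have "(\<lambda>\<omega>. X \<omega> $ t * W t \<omega> + (X \<omega> $ t)\<^sup>2) = (\<lambda>\<omega>. X \<omega> $ t * Xhat \<omega> $ t)"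
        by (rule ext) (simp add: W_def power2_eq_square algebra_simps)
      ultimately show ?thesis by simp
    qed
    have "(\<integral>\<omega>. X \<omega> $ t * real_cond_exp M F (\<lambda>\<omega>. Xhat \<omega> $ t) \<omega> \<partial>M) = (\<integral>\<omega>. X \<omega> $ t * Xhat \<omega> $ t \<partial>M)"
      by (rule Fsub.real_cond_exp_intg(2)[OF XY_int]) simp_all
    moreover have "(\<integral>\<omega>. X \<omega> $ t * real_cond_exp M F (\<lambda>\<omega>. Xhat \<omega> $ t) \<omega> \<partial>M) = (\<integral>\<omega>. (X \<omega> $ t)\<^sup>2 \<partial>M)"
    proof (rule integral_cong_AE)
      show "AE \<omega> in M. X \<omega> $ t * real_cond_exp M F (\<lambda>\<omega>. Xhat \<omega> $ t) \<omega> = (X \<omega> $ t)\<^sup>2"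
        using unbiased[of t] unfolding F_def[symmetric]
        by eventually_elim (simp add: power2_eq_square)
    qed simp_all
    ultimately have "(\<integral>\<omega>. X \<omega> $ t * Xhat \<omega> $ t \<partial>M) = (\<integral>\<omega>. (X \<omega> $ t)\<^sup>2 \<partial>M)" by simp
    moreover have "(\<integral>\<omega>. X \<omega> $ t * W t \<omega> \<partial>M) = (\<integral>\<omega>. X \<omega> $ t * Xhat \<omega> $ t \<partial>M) - (\<integral>\<omega>. (X \<omega> $ t)\<^sup>2 \<partial>M)"
    proof -
      have "(\<lambda>\<omega>. X \<omega> $ t * W t \<omega>) = (\<lambda>\<omega>. X \<omega> $ t * Xhat \<omega> $ t - (X \<omega> $ t)\<^sup>2)"
        by (rule ext) (simp add: W_def power2_eq_square algebra_simps)
      then show ?thesis using XY_int X2_int[of t] by (simp add: Bochner_Integration.integral_diff)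
    qed
    ultimately show ?thesis by simp
  qed
  have g_pt: "g (X \<omega>, Xhat \<omega>) = (\<Sum>t\<in>UNIV. c + ((1 / (2 * S) - (1 - a)\<^sup>2 / (2 * v)) * (X \<omega> $ t)\<^sup>2
      + (a * (1 - a) / v) * (X \<omega> $ t * W t \<omega>) + (- a\<^sup>2 / (2 * v)) * (W t \<omega>)\<^sup>2))" for \<omega>
    unfolding g_def
  proof (rule sum.cong[OF refl])
    fix t
    have "Xhat \<omega> $ t = X \<omega> $ t + W t \<omega>" unfolding W_def by simp
    then show "c - (fst (X \<omega>, Xhat \<omega>) $ t - a * snd (X \<omega>, Xhat \<omega>) $ t)\<^sup>2 / (2 * v) + (fst (X \<omega>, Xhat \<omega>) $ t)\<^sup>2 / (2 * S) =
         c + ((1 / (2 * S) - (1 - a)\<^sup>2 / (2 * v)) * (X \<omega> $ t)\<^sup>2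
      + (a * (1 - a) / v) * (X \<omega> $ t * W t \<omega>) + (- a\<^sup>2 / (2 * v)) * (W t \<omega>)\<^sup>2)"
      using v_pos S_pos by (simp add: power2_eq_square field_simps)
  qed
  have term_int: "integrable M (\<lambda>\<omega>. c + ((1 / (2 * S) - (1 - a)\<^sup>2 / (2 * v)) * (X \<omega> $ t)\<^sup>2
      + (a * (1 - a) / v) * (X \<omega> $ t * W t \<omega>) + (- a\<^sup>2 / (2 * v)) * (W t \<omega>)\<^sup>2))" for t
    using X2_int[of t] XW_int[of t] W2_int[of t] by simp
  have Qint: "integrable Q g \<longleftrightarrow> integrable M (\<lambda>\<omega>. g (X \<omega>, Xhat \<omega>))"
    unfolding Q_def by (rule integrable_distr_eq) simp_all
  have g_int: "integrable Q g"
    unfolding Qint g_pt using term_int by (rule Bochner_Integration.integrable_sum)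
  define d where "d t = (\<integral>\<omega>. (X \<omega> $ t - Xhat \<omega> $ t)\<^sup>2 \<partial>M)" for t
  have term_val: "(\<integral>\<omega>. c + ((1 / (2 * S) - (1 - a)\<^sup>2 / (2 * v)) * (X \<omega> $ t)\<^sup>2
      + (a * (1 - a) / v) * (X \<omega> $ t * W t \<omega>) + (- a\<^sup>2 / (2 * v)) * (W t \<omega>)\<^sup>2) \<partial>M)
      = c + (1 / (2 * S) - (1 - a)\<^sup>2 / (2 * v)) * S + (- a\<^sup>2 / (2 * v)) * d t" for t
    using X2_int[of t] XW_int[of t] W2_int[of t] X2_val[of t] XW_val[of t]
    by (simp add: d_def W2_eq prob_space)
  have sum_d: "(\<Sum>t\<in>UNIV. d t) = nr * D"
    unfolding D_def d_def nr_def by simp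
  have av: "(1 - a)\<^sup>2 * S + a\<^sup>2 * D = v"
  proof -
    have SD: "0 < S + D" using S_pos D_pos' by simp
    have "1 - a = D / (S + D)" unfolding a_def using SD by (simp add: field_simps)
    then have "(1 - a)\<^sup>2 * S + a\<^sup>2 * D = (D\<^sup>2 * S + S\<^sup>2 * D) / (S + D)\<^sup>2"
      unfolding a_def using SD by (simp add: power_divide add_divide_distrib)
    also have "\<dots> = (S * D) * (S + D) / ((S + D) * (S + D))"
      by (simp add: power2_eq_square algebra_simps)
    also have "\<dots> = v" unfolding v_def using SD by simp
    finally show ?thesis .
  qed
  have alg: "(1 / (2 * S) - (1 - a)\<^sup>2 / (2 * v)) * S * nr + (- a\<^sup>2 / (2 * v)) * (nr * D) = 0"
  proof -
    have "(1 / (2 * S) - (1 - a)\<^sup>2 / (2 * v)) * S * nr + (- a\<^sup>2 / (2 * v)) * (nr * D)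
        = nr / 2 - nr * ((1 - a)\<^sup>2 * S + a\<^sup>2 * D) / (2 * v)"
      using S_pos v_pos by (simp add: field_simps)
    also have "\<dots> = 0" unfolding av using v_pos by simp
    finally show ?thesis .
  qed
  have g_val: "integral\<^sup>L Q g = nr * c"
  proof -
    have "integral\<^sup>L Q g = (\<integral>\<omega>. g (X \<omega>, Xhat \<omega>) \<partial>M)"
      unfolding Q_def by (rule integral_distr) simp_all
    also have "\<dots> = (\<Sum>t\<in>UNIV. c + (1 / (2 * S) - (1 - a)\<^sup>2 / (2 * v)) * S + (- a\<^sup>2 / (2 * v)) * d t)"
      unfolding g_pt by (subst Bochner_Integration.integral_sum) (simp_all only: term_int term_val)
    also have "\<dots> = nr * c + ((1 / (2 * S) - (1 - a)\<^sup>2 / (2 * v)) * S * nr + (- a\<^sup>2 / (2 * v)) * (\<Sum>t\<in>UNIV. d t))"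
      unfolding nr_def by (rule sum_aff)
    also have "\<dots> = nr * c" unfolding sum_d alg by simp
    finally show ?thesis .
  qed
  have inner: "(\<integral>\<^sup>+ x. ennreal (exp (g (x, y))) \<partial>PX) = 1" for y
  proof -
    define \<phi> where "\<phi> t z = exp (c - (z - a * y $ t)\<^sup>2 / (2 * v) + z\<^sup>2 / (2 * S))" for t z
    have \<phi>_meas[measurable]: "(\<lambda>z. ennreal (\<phi> t z)) \<in> borel_measurable borel" for t
      unfolding \<phi>_def by measurable
    have eq1: "ennreal (exp (g (x, y))) = (\<Prod>t\<in>UNIV. ennreal (\<phi> t (x $ t)))" for x
      unfolding g_def \<phi>_def by (simp add: exp_sum prod_ennreal)
    have one: "(\<integral>\<^sup>+ \<omega>. ennreal (\<phi> t (X \<omega> $ t)) \<partial>M) = 1" for t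
    proof -
      have "(\<integral>\<^sup>+ \<omega>. ennreal (\<phi> t (X \<omega> $ t)) \<partial>M)
          = (\<integral>\<^sup>+ z. ennreal (normal_density 0 \<sigma> z) * ennreal (\<phi> t z) \<partial>lborel)"
        by (rule distributed_nn_integral[OF X_gauss, symmetric]) simp
      also have "\<dots> = (\<integral>\<^sup>+ z. ennreal (normal_density (a * y $ t) s z) \<partial>lborel)"
      proof (rule nn_integral_cong)
        fix z
        have "normal_density 0 \<sigma> z * \<phi> t z = normal_density (a * y $ t) s z"
          unfolding \<phi>_def c_def s_def
          by (rule nd_ident[OF S_pos D_pos' \<open>\<sigma> > 0\<close> S_def v_def])
        then show "ennreal (normal_density 0 \<sigma> z) * ennreal (\<phi> t z) = ennreal (normal_density (a * y $ t) s z)"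
          by (simp add: ennreal_mult'[symmetric] \<phi>_def)
      qed
      also have "\<dots> = ennreal (\<integral> z. normal_density (a * y $ t) s z \<partial>lborel)"
        by (rule nn_integral_eq_integral) (auto intro: integrable_normal_density[OF s_pos])
      also have "\<dots> = 1" using integral_normal_density[OF s_pos] by simp
      finally show ?thesis .
    qed
    have "(\<integral>\<^sup>+ x. ennreal (exp (g (x, y))) \<partial>PX) = (\<integral>\<^sup>+ \<omega>. (\<Prod>t\<in>UNIV. ennreal (\<phi> t (X \<omega> $ t))) \<partial>M)"
      unfolding PX_def eq1 by (subst nn_integral_distr) auto
    also have "\<dots> = (\<Prod>t\<in>UNIV. \<integral>\<^sup>+ \<omega>. ennreal (\<phi> t (X \<omega> $ t)) \<partial>M)"
    proof (rule indep_vars_nn_integral)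
      show "indep_vars (\<lambda>_. borel) (\<lambda>t \<omega>. ennreal (\<phi> t (X \<omega> $ t))) UNIV"
        by (rule indep_vars_compose2[OF X_indep]) simp
    qed auto
    also have "\<dots> = 1" by (simp add: one)
    finally show ?thesis .
  qed
  have bound: "(\<integral>\<^sup>+ z. ennreal (exp (g z)) \<partial>P) \<le> 1"
  proof -
    have gP[measurable]: "(\<lambda>z. ennreal (exp (g z))) \<in> borel_measurable (PX \<Otimes>\<^sub>M PY)"
      unfolding PX_def PY_def g_def by measurable
    have "(\<integral>\<^sup>+ z. ennreal (exp (g z)) \<partial>P) = (\<integral>\<^sup>+ y. (\<integral>\<^sup>+ x. ennreal (exp (g (x, y))) \<partial>PX) \<partial>PY)"
      unfolding P_def by (rule PXY.nn_integral_snd[symmetric]) (rule gP)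
    also have "\<dots> = (\<integral>\<^sup>+ y. 1 \<partial>PY)" by (simp add: inner)
    also have "\<dots> = 1" using PXY.M2.emeasure_space_1 by simp
    finally show ?thesis by simp
  qed
  have "nr * c \<le> KL_divergence (exp 1) P Q" if cond: "absolutely_continuous P Q" "integrable Q (entropy_density (exp 1) P Q)"
    using KL_lower[OF sfP pQ cond(1) sets_eq g_meas g_int cond(2) bound] g_val by simp
  note key = this
  have MI: "mutual_info M borel borel X Xhat = (if absolutely_continuous P Q \<and> integrable Q (entropy_density (exp 1) P Q) then ereal (KL_divergence (exp 1) P Q) else \<infinity>)"
    unfolding mutual_info_def mutual_information_def P_def PX_def PY_def Q_def Let_def by simp
  have goalD: "(1 / real CARD('n)) * (\<Sum>t\<in>UNIV. \<integral>\<omega>. (X \<omega> $ t - Xhat \<omega> $ t)\<^sup>2 \<partial>M) = D"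
    by (simp add: D_def)
  show ?thesis
  proof (cases "absolutely_continuous P Q \<and> integrable Q (entropy_density (exp 1) P Q)")
    case True
    then have "nr * c \<le> KL_divergence (exp 1) P Q" using key by blast
    then have "c \<le> KL_divergence (exp 1) P Q / nr" using nr_pos by (simp add: pos_le_divide_eq mult.commute)
    then show ?thesis unfolding goalD MI using True nr_pos
      by (simp add: c_eq S_def nr_def ereal_divide)
  next
    case False
    then have "mutual_info M borel borel X Xhat = \<infinity>" unfolding MI by simp
    moreover have "(\<infinity>::ereal) / ereal (real CARD('n)) = \<infinity>" by (simp add: divide_ereal_def)
    ultimately show ?thesis by simp
  qed
qed

end
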